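(* In the lower-bound instance for CTS-G described in the context, for any round $t>T/2$ such that $K_{t-1}\le0.5\,m(t-H)$, we have $|B_t|\ge2m$, where $B_t:=\{a\in[N]\setminus G: n_{a,t}\le L\}$ and $L:=\frac{16m\ln(T/2)}{25\Delta^2}-1$.
   Context: Top-$m$ instance: $N$ base arms with $N\ge400m$, $m\ge1$; every round any $m$ of the $N$ arms may be played. A set $G\subset[N]$ with $|G|=m$ is fixed; rewards are deterministic: $r_a=\Delta$ for $a\in G$ and $r_a=0$ otherwise, with $\Delta:=\frac45\sqrt{\frac{N\ln T}{T}}$, and $T$ is sufficiently large (in particular $T>\frac{16}{25}N\ln T$). The agent runs CTS-G with $\gamma=1$: in round $t$ draw independently $w_{a,t}\sim\mathcal{N}\big(\hat r_{a,n_{a,t}},\frac{m\ln t}{n_{a,t}+1}\big)$ and play the $m$ arms with largest $w_{a,t}$; $n_{a,t}$ is the number of plays of $a$ in rounds $1,\dots,t-1$, $\hat r_{a,n_{a,t}}$ its empirical mean ($0$ if unplayed). $k_s$ is the number of arms of $[N]\setminus G$ played in round $s$, $K_{t-1}:=\sum_{s=1}^{t-1}k_s$, and $H:=\lceil64m\ln T/\Delta^2\rceil$. *)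

theory Defs
  imports Complex_Main
begin

definition valid_history :: "nat \<Rightarrow> nat \<Rightarrow> (nat \<Rightarrow> nat set) \<Rightarrow> nat \<Rightarrow> bool" where
  "valid_history N m play t \<longleftrightarrow> (\<forall>s\<in>{1..<t}. play s \<subseteq> {..<N} \<and> card (play s) = m)"

definition n_plays :: "(nat \<Rightarrow> nat set) \<Rightarrow> nat \<Rightarrow> nat \<Rightarrow> nat" where
  "n_plays play a t = card {s \<in> {1..<t}. a \<in> play s}"

text \<open>K_{t-1} = sum_{s=1}^{t-1} k_s, k_s = number of arms outside G played in round s.\<close>
definition K_sub :: "nat set \<Rightarrow> (nat \<Rightarrow> nat set) \<Rightarrow> nat \<Rightarrow> nat" where
  "K_sub G play t = (\<Sum>s\<in>{1..<t}. card (play s - G))"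

definition gap :: "nat \<Rightarrow> nat \<Rightarrow> real" where
  "gap N T = 4/5 * sqrt (real N * ln (real T) / real T)"

definition H_len :: "nat \<Rightarrow> nat \<Rightarrow> nat \<Rightarrow> int" where
  "H_len N m T = \<lceil>64 * real m * ln (real T) / (gap N T)\<^sup>2\<rceil>"

definition L_thr :: "nat \<Rightarrow> nat \<Rightarrow> nat \<Rightarrow> real" where
  "L_thr N m T = 16 * real m * ln (real T / 2) / (25 * (gap N T)\<^sup>2) - 1"

definition B_set :: "nat \<Rightarrow> nat \<Rightarrow> nat \<Rightarrow> nat set \<Rightarrow> (nat \<Rightarrow> nat set) \<Rightarrow> nat \<Rightarrow> nat set" where
  "B_set N m T G play t = {a \<in> {..<N} - G. real (n_plays play a t) \<le> L_thr N m T}"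

end

theory Submission
  imports Defs
begin

lemma count_bound:
  assumes vh: "valid_history N m play t" and AG: "A \<inter> G = {}" and fA: "finite A"
  shows "(\<Sum>a\<in>A. n_plays play a t) \<le> K_sub G play t"
proof -
  have "(\<Sum>a\<in>A. n_plays play a t) = (\<Sum>a\<in>A. \<Sum>s\<in>{1..<t}. if a \<in> play s then 1 else (0::nat))"
    unfolding n_plays_def
  proof (intro sum.cong refl)
    fix a
    have "(\<Sum>s\<in>{1..<t}. if a \<in> play s then 1 else (0::nat)) = sum (\<lambda>_. 1) {s\<in>{1..<t}. a \<in> play s}"
      by (rule sum.inter_filter[symmetric]) simp
    then show "card {s \<in> {1..<t}. a \<in> play s} = (\<Sum>s\<in>{1..<t}. if a \<in> play s then 1 else (0::nat))"
      by simp
  qed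
  also have "\<dots> = (\<Sum>s\<in>{1..<t}. \<Sum>a\<in>A. if a \<in> play s then 1 else (0::nat))"
    by (rule sum.swap)
  also have "\<dots> = (\<Sum>s\<in>{1..<t}. card (A \<inter> play s))"
    using fA by (simp add: sum.If_cases Int_def)
  also have "\<dots> \<le> (\<Sum>s\<in>{1..<t}. card (play s - G))"
  proof (rule sum_mono)
    fix s assume "s \<in> {1..<t}"
    then have "finite (play s)" using vh unfolding valid_history_def
      by (meson finite_lessThan finite_subset)
    moreover have "A \<inter> play s \<subseteq> play s - G" using AG by blast
    ultimately show "card (A \<inter> play s) \<le> card (play s - G)"
      by (simp add: card_mono)
  qed
  finally show ?thesis unfolding K_sub_def .
qed

lemma L_lower:
  fixes N m T :: nat
  assumes m: "m \<ge> 1" and N: "N \<ge> 1" and T: "T \<ge> 1024 + 4 * N"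
  shows "L_thr N m T \<ge> 0.6 * real m * real T / real N"
proof -
  have Tpos: "real T > 0" using T by simp
  define x where "x = ln (real T)"
  have x10: "x \<ge> 10 * ln 2"
  proof -
    have "10 * ln (2::real) = ln (2^10)" using ln_realpow[of 2 10] by simp
    also have "\<dots> \<le> x" unfolding x_def using T by (subst ln_le_cancel_iff) auto
    finally show ?thesis .
  qed
  have ln2: "ln (2::real) > 0" by simp
  have xpos: "x > 0" using x10 ln2 by linarith
  have lnT2: "ln (real T / 2) = x - ln 2" unfolding x_def using Tpos by (simp add: ln_div)
  have g2: "(gap N T)\<^sup>2 = 16/25 * (real N * x / real T)"
  proof -
    have "0 \<le> real N * x / real T" using xpos Tpos by simp
    then have "(sqrt (real N * x / real T))\<^sup>2 = real N * x / real T" by simp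
    have e: "\<And>s::real. (4/5 * s)\<^sup>2 = 16/25 * s\<^sup>2" by (simp add: power2_eq_square)
    have "(gap N T)\<^sup>2 = (4/5 * sqrt (real N * x / real T))\<^sup>2" unfolding gap_def x_def ..
    also have "\<dots> = 16/25 * (sqrt (real N * x / real T))\<^sup>2" by (rule e)
    also have "\<dots> = 16/25 * (real N * x / real T)" using \<open>(sqrt (real N * x / real T))\<^sup>2 = real N * x / real T\<close> by (rule arg_cong)
    finally show ?thesis .
  qed
  have L: "L_thr N m T = real m * real T * (x - ln 2) / (real N * x) - 1"
    unfolding L_thr_def lnT2 g2 using N xpos Tpos by (simp add: field_simps)
  have r: "(x - ln 2) / x \<ge> 0.9" using x10 xpos by (simp add: field_simps)
  have "real m * real T * (x - ln 2) / (real N * x) = (real m * real T / real N) * ((x - ln 2) / x)"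
    by simp
  also have "\<dots> \<ge> (real m * real T / real N) * 0.9"
    by (rule mult_left_mono[OF r]) simp
  finally have a: "real m * real T * (x - ln 2) / (real N * x) \<ge> 0.9 * (real m * real T / real N)" by simp
  have "real T \<ge> 4 * real N" using T by simp
  then have "real T / real N \<ge> 4" using N by (simp add: field_simps)
  then have "real m * (real T / real N) \<ge> 4" using m
    using mult_mono[of 1 "real m" 4 "real T / real N"] m by simp
  moreover have "real m * (real T / real N) = real m * real T / real N" by simp
  ultimately have "0.3 * (real m * real T / real N) \<ge> 1" by linarith
  then show ?thesis unfolding L using a by simp
qed

theorem lemma9:
  fixes N m :: nat
  assumes "m \<ge> 1" and "N \<ge> 400 * m"
  shows "\<exists>T0::nat. \<forall>T\<ge>T0. real T > 16/25 * real N * ln (real T) \<longrightarrow>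
           (\<forall>(G::nat set) (play::nat \<Rightarrow> nat set) (t::nat).
              G \<subseteq> {..<N} \<longrightarrow> card G = m \<longrightarrow> valid_history N m play t \<longrightarrow>
              real t > real T / 2 \<longrightarrow> t \<le> T \<longrightarrow>
              real (K_sub G play t) \<le> 0.5 * real m * (real t - real_of_int (H_len N m T)) \<longrightarrow>
              card (B_set N m T G play t) \<ge> 2 * m)"
proof (intro exI allI impI)
  fix T G play t
  assume T: "1024 + 4 * N \<le> T" and GN: "G \<subseteq> {..<N}" and cG: "card G = m"
    and vh: "valid_history N m play t" and tT: "t \<le> T"
    and K: "real (K_sub G play t) \<le> 0.5 * real m * (real t - real_of_int (H_len N m T))"
  have N1: "N \<ge> 1" using assms by simp
  define Lt where "Lt = L_thr N m T"
  have Llow: "Lt \<ge> 0.6 * real m * real T / real N" unfolding Lt_def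
    using L_lower[OF assms(1) N1 T] .
  have H0: "real_of_int (H_len N m T) \<ge> 0"
  proof -
    have "ln (real T) \<ge> 0" using T by simp
    then have "0 \<le> 64 * real m * ln (real T) / (gap N T)\<^sup>2" by simp
    then show ?thesis unfolding H_len_def using le_of_int_ceiling order.trans by blast
  qed
  have Kt: "real (K_sub G play t) \<le> 0.5 * real m * real T"
  proof -
    have "0.5 * real m * (real t - real_of_int (H_len N m T)) \<le> 0.5 * real m * real t"
      using H0 by (simp add: mult_left_mono)
    also have "\<dots> \<le> 0.5 * real m * real T" using tT by (simp add: mult_left_mono)
    finally show ?thesis using K by linarith
  qed
  define U where "U = {..<N} - G"
  define A where "A = U - B_set N m T G play t"
  have BU: "B_set N m T G play t \<subseteq> U" unfolding B_set_def U_def by auto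
  have fU: "finite U" unfolding U_def by simp
  have cU: "card U = N - m" unfolding U_def using GN cG by (simp add: card_Diff_subset finite_subset)
  have fA: "finite A" unfolding A_def using fU by simp
  have AG: "A \<inter> G = {}" unfolding A_def U_def by auto
  have Abig: "\<And>a. a \<in> A \<Longrightarrow> real (n_plays play a t) > Lt"
    unfolding A_def U_def B_set_def Lt_def by auto
  have "real (card A) * Lt = (\<Sum>a\<in>A. Lt)" by simp
  also have "\<dots> \<le> (\<Sum>a\<in>A. real (n_plays play a t))"
    by (rule sum_mono) (use Abig in force)
  also have "\<dots> = real (\<Sum>a\<in>A. n_plays play a t)" by simp
  also have "\<dots> \<le> real (K_sub G play t)"
    using count_bound[OF vh AG fA] by linarith
  finally have cA: "real (card A) * Lt \<le> 0.5 * real m * real T" using Kt by linarith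
  have "real (card A) * (0.6 * real m * real T / real N) \<le> real (card A) * Lt"
    using Llow by (intro mult_left_mono) auto
  then have "real (card A) * (0.6 * real m * real T / real N) \<le> 0.5 * real m * real T"
    using cA by linarith
  moreover have "real m * real T > 0" using assms T by simp
  moreover have "real (card A) * (0.6 * real m * real T / real N) = (real (card A) * 0.6 / real N) * (real m * real T)"
    by simp
  moreover have "0.5 * real m * real T = 0.5 * (real m * real T)" by simp
  ultimately have "(real (card A) * 0.6 / real N) * (real m * real T) \<le> 0.5 * (real m * real T)"
    by simp
  then have "real (card A) * 0.6 / real N \<le> 0.5"
    using \<open>real m * real T > 0\<close> mult_le_cancel_right_pos by blast
  then have cAle: "real (card A) * 6 \<le> 5 * real N" using N1 by (simp add: field_simps)
  have "card U = card A + card (B_set N m T G play t)"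
  proof -
    have "card A = card U - card (B_set N m T G play t)"
      unfolding A_def using BU fU by (simp add: card_Diff_subset finite_subset)
    moreover have "card (B_set N m T G play t) \<le> card U" using BU fU by (simp add: card_mono)
    ultimately show ?thesis by simp
  qed
  then have "real (card (B_set N m T G play t)) = real N - real m - real (card A)"
    using cU assms by simp
  then have "real (card (B_set N m T G play t)) \<ge> 2 * real m"
  proof -
    have "real (400 * m) \<le> real N" using assms(2) by (rule of_nat_mono)
    then have "real N \<ge> 400 * real m" by simp
    then show ?thesis using cAle \<open>real (card (B_set N m T G play t)) = real N - real m - real (card A)\<close> by linarith
  qed
  then show "card (B_set N m T G play t) \<ge> 2 * m" by linarith
qed

end
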